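(* Let $S$ be a connected graded reduced affine monoid. Then the graded catenary degree $c_{\mathrm{gr}}(S)$ is the minimal non-negative integer $d$ such that there exists a subset $\Lambda\subset M\times M$ generating the semigroup congruence $\sim_S$ with $|\alpha|_{\mathrm{gr}}\le d$ and $|\gamma|_{\mathrm{gr}}\le d$ for all $(x^{\alpha},x^{\gamma})\in\Lambda$.
   Context: A monoid is a commutative cancellative semigroup with identity; affine means a finitely generated submonoid of a finitely generated free abelian group; reduced means the identity is the only unit. $S$ is graded if $S$ is the disjoint union of subsets $S_d$, $d\in\mathbb{N}_0$, with $S_dS_e\subseteq S_{d+e}$; write $|s|=d$ for $s\in S_d$; connected graded means $S_0=\{1\}$. $\mathcal{A}(S)$ is the finite set of atoms; $a^{\alpha}=\prod_a a^{\alpha(a)}$ for $\alpha\in\mathbb{N}_0^{\mathcal{A}(S)}$. $M$ is the free commutative monoid on indeterminates $x_a$ ($a\in\mathcal{A}(S)$), with elements $x^{\alpha}$, and $\sim_S$ is the congruence on $M$ with $x^{\alpha}\sim_S x^{\gamma}$ iff $a^{\alpha}=a^{\gamma}$. Set $|\alpha|_{\mathrm{gr}}=\sum_a\alpha(a)|a|$, $\gcd(\alpha,\gamma)(a)=\min\{\alpha(a),\gamma(a)\}$, and $d_{\mathrm{gr}}(\alpha,\gamma)=\max\{|\alpha-\gcd(\alpha,\gamma)|_{\mathrm{gr}},|\gamma-\gcd(\alpha,\gamma)|_{\mathrm{gr}}\}$. The graded catenary degree $c_{\mathrm{gr}}(S)$ is the minimal $d$ such that whenever $a^{\alpha}=a^{\gamma}$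 there is a sequence $\alpha=\alpha^{(0)},\dots,\alpha^{(k)}=\gamma$ in $\mathbb{N}_0^{\mathcal{A}(S)}$ with $a^{\alpha^{(j)}}=a^{\alpha^{(j+1)}}$ and $d_{\mathrm{gr}}(\alpha^{(j)},\alpha^{(j+1)})\le d$ for all $j$. *)

theory Defs
  imports Main
begin

text \<open>Monoids are modelled additively inside the free abelian group \<open>\<int>^'i\<close>
  (functions \<open>'i \<Rightarrow> int\<close>, \<open>'i\<close> a finite type); the identity is \<open>0\<close>.\<close>

definition vzero :: "'i \<Rightarrow> int" where "vzero = (\<lambda>i. 0)"
definition vadd :: "('i \<Rightarrow> int) \<Rightarrow> ('i \<Rightarrow> int) \<Rightarrow> ('i \<Rightarrow> int)"
  where "vadd x y = (\<lambda>i. x i + y i)"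

inductive_set mon_gen :: "('i \<Rightarrow> int) set \<Rightarrow> ('i \<Rightarrow> int) set" for G where
  zero: "vzero \<in> mon_gen G"
| gen: "g \<in> G \<Longrightarrow> x \<in> mon_gen G \<Longrightarrow> vadd g x \<in> mon_gen G"

definition affine_monoid :: "('i::finite \<Rightarrow> int) set \<Rightarrow> bool" where
  "affine_monoid S \<longleftrightarrow> (\<exists>G. finite G \<and> S = mon_gen G)"

definition units_of_monoid :: "('i \<Rightarrow> int) set \<Rightarrow> ('i \<Rightarrow> int) set" where
  "units_of_monoid S = {u \<in> S. \<exists>v\<in>S. vadd u v = vzero}"

definition reduced :: "('i \<Rightarrow> int) set \<Rightarrow> bool" where
  "reduced S \<longleftrightarrow> units_of_monoid S = {vzero}"

text \<open>Grading: \<open>S_d = {s \<in> S. deg s = d}\<close>; \<open>S_d S_e \<subseteq> S_(d+e)\<close> means additivity of deg.\<close>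
definition graded :: "('i \<Rightarrow> int) set \<Rightarrow> (('i \<Rightarrow> int) \<Rightarrow> nat) \<Rightarrow> bool" where
  "graded S deg \<longleftrightarrow> (\<forall>x\<in>S. \<forall>y\<in>S. deg (vadd x y) = deg x + deg y)"

definition connected_graded :: "('i \<Rightarrow> int) set \<Rightarrow> (('i \<Rightarrow> int) \<Rightarrow> nat) \<Rightarrow> bool" where
  "connected_graded S deg \<longleftrightarrow> graded S deg \<and> {s \<in> S. deg s = 0} = {vzero}"

definition atoms :: "('i \<Rightarrow> int) set \<Rightarrow> ('i \<Rightarrow> int) set" where
  "atoms S = {a \<in> S. a \<notin> units_of_monoid S \<and>
      (\<forall>b\<in>S. \<forall>c\<in>S. a = vadd b c \<longrightarrow> b \<in> units_of_monoid S \<or> c \<in> units_of_monoid S)}"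

text \<open>The free commutative monoid \<open>M\<close> on the indeterminates \<open>x_a\<close>, \<open>a\<close> an atom:
  exponent vectors \<open>\<alpha> \<in> \<nat>_0^{A(S)}\<close>, i.e. functions vanishing outside the atoms.\<close>
definition freeM :: "('i \<Rightarrow> int) set \<Rightarrow> (('i \<Rightarrow> int) \<Rightarrow> nat) set" where
  "freeM S = {\<alpha>. \<forall>a. a \<notin> atoms S \<longrightarrow> \<alpha> a = 0}"

definition madd :: "(('i \<Rightarrow> int) \<Rightarrow> nat) \<Rightarrow> (('i \<Rightarrow> int) \<Rightarrow> nat) \<Rightarrow> (('i \<Rightarrow> int) \<Rightarrow> nat)"
  where "madd \<alpha> \<beta> = (\<lambda>a. \<alpha> a + \<beta> a)"

definition aeval :: "('i \<Rightarrow> int) set \<Rightarrow> (('i \<Rightarrow> int) \<Rightarrow> nat) \<Rightarrow> ('i \<Rightarrow> int)" where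
  "aeval S \<alpha> = (\<lambda>i. \<Sum>a\<in>atoms S. int (\<alpha> a) * a i)"

definition simS :: "('i \<Rightarrow> int) set \<Rightarrow> ((('i \<Rightarrow> int) \<Rightarrow> nat) \<times> (('i \<Rightarrow> int) \<Rightarrow> nat)) set" where
  "simS S = {(\<alpha>, \<gamma>). \<alpha> \<in> freeM S \<and> \<gamma> \<in> freeM S \<and> aeval S \<alpha> = aeval S \<gamma>}"

definition is_congruence :: "('i \<Rightarrow> int) set \<Rightarrow> ((('i \<Rightarrow> int) \<Rightarrow> nat) \<times> (('i \<Rightarrow> int) \<Rightarrow> nat)) set \<Rightarrow> bool" where
  "is_congruence S R \<longleftrightarrow> equiv (freeM S) R \<and>
     (\<forall>\<alpha> \<gamma> \<beta>. (\<alpha>, \<gamma>) \<in> R \<longrightarrow> \<beta> \<in> freeM S \<longrightarrow> (madd \<alpha> \<beta>, madd \<gamma> \<beta>) \<in> R)"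

definition cong_gen :: "('i \<Rightarrow> int) set \<Rightarrow> ((('i \<Rightarrow> int) \<Rightarrow> nat) \<times> (('i \<Rightarrow> int) \<Rightarrow> nat)) set
    \<Rightarrow> ((('i \<Rightarrow> int) \<Rightarrow> nat) \<times> (('i \<Rightarrow> int) \<Rightarrow> nat)) set" where
  "cong_gen S \<Lambda> = \<Inter> {R. is_congruence S R \<and> \<Lambda> \<subseteq> R}"

definition gr_deg :: "('i \<Rightarrow> int) set \<Rightarrow> (('i \<Rightarrow> int) \<Rightarrow> nat) \<Rightarrow> (('i \<Rightarrow> int) \<Rightarrow> nat) \<Rightarrow> nat" where
  "gr_deg S deg \<alpha> = (\<Sum>a\<in>atoms S. \<alpha> a * deg a)"

definition mgcd :: "(('i \<Rightarrow> int) \<Rightarrow> nat) \<Rightarrow> (('i \<Rightarrow> int) \<Rightarrow> nat) \<Rightarrow> (('i \<Rightarrow> int) \<Rightarrow> nat)"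
  where "mgcd \<alpha> \<gamma> = (\<lambda>a. min (\<alpha> a) (\<gamma> a))"

definition d_gr :: "('i \<Rightarrow> int) set \<Rightarrow> (('i \<Rightarrow> int) \<Rightarrow> nat) \<Rightarrow> (('i \<Rightarrow> int) \<Rightarrow> nat)
    \<Rightarrow> (('i \<Rightarrow> int) \<Rightarrow> nat) \<Rightarrow> nat" where
  "d_gr S deg \<alpha> \<gamma> = max (gr_deg S deg (\<lambda>a. \<alpha> a - mgcd \<alpha> \<gamma> a))
                          (gr_deg S deg (\<lambda>a. \<gamma> a - mgcd \<alpha> \<gamma> a))"

definition has_gr_chains :: "('i \<Rightarrow> int) set \<Rightarrow> (('i \<Rightarrow> int) \<Rightarrow> nat) \<Rightarrow> nat \<Rightarrow> bool" where
  "has_gr_chains S deg d \<longleftrightarrow>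
     (\<forall>\<alpha>\<in>freeM S. \<forall>\<gamma>\<in>freeM S. aeval S \<alpha> = aeval S \<gamma> \<longrightarrow>
        (\<exists>cs. cs \<noteq> [] \<and> hd cs = \<alpha> \<and> last cs = \<gamma> \<and> set cs \<subseteq> freeM S \<and>
           (\<forall>j. Suc j < length cs \<longrightarrow>
               aeval S (cs ! j) = aeval S (cs ! Suc j) \<and> d_gr S deg (cs ! j) (cs ! Suc j) \<le> d)))"

definition c_gr :: "('i \<Rightarrow> int) set \<Rightarrow> (('i \<Rightarrow> int) \<Rightarrow> nat) \<Rightarrow> nat" where
  "c_gr S deg = (LEAST d. has_gr_chains S deg d)"

end

theory Submission
  imports Defs
begin

lemma vadd_zero[simp]: "vadd vzero x = x" "vadd x vzero = x"
  by (simp_all add: vadd_def vzero_def)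

lemma vadd_cancel: "vadd x z = vadd y z \<Longrightarrow> x = y"
  by (simp add: vadd_def fun_eq_iff)

lemma vadd_cancel_left: "vadd z x = vadd z y \<Longrightarrow> x = y"
  by (simp add: vadd_def fun_eq_iff)

lemma madd_comm: "madd x y = madd y x"
  by (simp add: madd_def fun_eq_iff)

lemma aeval_madd: "aeval S (madd a b) = vadd (aeval S a) (aeval S b)"
  by (simp add: aeval_def madd_def vadd_def distrib_right sum.distrib fun_eq_iff)

lemma madd_freeM: "a \<in> freeM S \<Longrightarrow> b \<in> freeM S \<Longrightarrow> madd a b \<in> freeM S"
  by (simp add: freeM_def madd_def)

lemma minus_freeM: "a \<in> freeM S \<Longrightarrow> (\<lambda>x. a x - b x) \<in> freeM S"
  by (simp add: freeM_def)

lemma nat_aux: "(p + q) - min (p + q) (r + q) = p - min p (r::nat)"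
  by (simp add: min_def)

lemma d_gr_transl: "d_gr S deg (madd x b) (madd y b) = d_gr S deg x y"
proof -
  have 1: "(\<lambda>a. madd x b a - mgcd (madd x b) (madd y b) a) = (\<lambda>a. x a - mgcd x y a)"
    by (simp add: madd_def mgcd_def nat_aux)
  have 2: "(\<lambda>a. madd y b a - mgcd (madd x b) (madd y b) a) = (\<lambda>a. y a - mgcd x y a)"
    by (simp add: madd_def mgcd_def fun_eq_iff min_def)
  show ?thesis unfolding d_gr_def 1 2 ..
qed

lemma d_gr_sym: "d_gr S deg x y = d_gr S deg y x"
  by (simp add: d_gr_def mgcd_def min.commute max.commute)

lemma gr_deg_mono: "(\<And>a. x a \<le> y a) \<Longrightarrow> gr_deg S deg x \<le> gr_deg S deg y"
  unfolding gr_deg_def by (intro sum_mono mult_right_mono) auto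

lemma d_gr_le: "d_gr S deg x y \<le> max (gr_deg S deg x) (gr_deg S deg y)"
  unfolding d_gr_def by (intro max.mono gr_deg_mono) auto

definition stp :: "('i \<Rightarrow> int) set \<Rightarrow> (('i \<Rightarrow> int) \<Rightarrow> nat) \<Rightarrow> nat
   \<Rightarrow> ((('i \<Rightarrow> int) \<Rightarrow> nat) \<times> (('i \<Rightarrow> int) \<Rightarrow> nat)) set" where
  "stp S deg d = {(x,y). x \<in> freeM S \<and> y \<in> freeM S \<and> aeval S x = aeval S y \<and> d_gr S deg x y \<le> d}"

lemma stp_sym: "sym (stp S deg d)"
  by (auto simp: sym_def stp_def d_gr_sym)

lemma stp_transl: "(x,y) \<in> stp S deg d \<Longrightarrow> b \<in> freeM S \<Longrightarrow> (madd x b, madd y b) \<in> stp S deg d"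
  by (auto simp: stp_def d_gr_transl madd_freeM aeval_madd)

lemma stp_rtrancl_transl: "(x,y) \<in> (stp S deg d)\<^sup>* \<Longrightarrow> b \<in> freeM S \<Longrightarrow> (madd x b, madd y b) \<in> (stp S deg d)\<^sup>*"
proof (induction rule: rtrancl_induct)
  case base then show ?case by simp
next
  case (step y z)
  then show ?case by (meson rtrancl.rtrancl_into_rtrancl stp_transl)
qed

lemma chain_of_rtrancl:
  assumes "(x,y) \<in> (stp S deg d)\<^sup>*" "x \<in> freeM S"
  shows "\<exists>cs. cs \<noteq> [] \<and> hd cs = x \<and> last cs = y \<and> set cs \<subseteq> freeM S \<and>
           (\<forall>j. Suc j < length cs \<longrightarrow>
               aeval S (cs ! j) = aeval S (cs ! Suc j) \<and> d_gr S deg (cs ! j) (cs ! Suc j) \<le> d)"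
  using assms
proof (induction rule: converse_rtrancl_induct)
  case base
  then show ?case by (intro exI[of _ "[y]"]) auto
next
  case (step x z)
  then have xz: "x \<in> freeM S" "z \<in> freeM S" "aeval S x = aeval S z" "d_gr S deg x z \<le> d"
    by (auto simp: stp_def)
  from step.IH[OF xz(2)] obtain cs where cs: "cs \<noteq> [] \<and> hd cs = z \<and> last cs = y \<and> set cs \<subseteq> freeM S \<and>
           (\<forall>j. Suc j < length cs \<longrightarrow>
               aeval S (cs ! j) = aeval S (cs ! Suc j) \<and> d_gr S deg (cs ! j) (cs ! Suc j) \<le> d)" by blast
  have "\<forall>j. Suc j < length (x # cs) \<longrightarrow>
               aeval S ((x#cs) ! j) = aeval S ((x#cs) ! Suc j) \<and> d_gr S deg ((x#cs) ! j) ((x#cs) ! Suc j) \<le> d"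
  proof (intro allI impI)
    fix j assume j: "Suc j < length (x # cs)"
    show "aeval S ((x#cs) ! j) = aeval S ((x#cs) ! Suc j) \<and> d_gr S deg ((x#cs) ! j) ((x#cs) ! Suc j) \<le> d"
    proof (cases j)
      case 0
      then show ?thesis using cs xz by (auto simp: hd_conv_nth)
    next
      case (Suc k)
      then show ?thesis using cs j by auto
    qed
  qed
  then show ?case using cs xz by (intro exI[of _ "x # cs"]) auto
qed

lemma rtrancl_of_chain:
  "cs \<noteq> [] \<Longrightarrow> set cs \<subseteq> freeM S \<Longrightarrow>
           (\<forall>j. Suc j < length cs \<longrightarrow>
               aeval S (cs ! j) = aeval S (cs ! Suc j) \<and> d_gr S deg (cs ! j) (cs ! Suc j) \<le> d)
   \<Longrightarrow> (hd cs, last cs) \<in> (stp S deg d)\<^sup>*"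
proof (induction cs)
  case Nil then show ?case by simp
next
  case (Cons x cs)
  show ?case
  proof (cases "cs = []")
    case True then show ?thesis by simp
  next
    case False
    have h: "\<forall>j. Suc j < length cs \<longrightarrow>
               aeval S (cs ! j) = aeval S (cs ! Suc j) \<and> d_gr S deg (cs ! j) (cs ! Suc j) \<le> d"
    proof (intro allI impI)
      fix j assume "Suc j < length cs"
      then show "aeval S (cs ! j) = aeval S (cs ! Suc j) \<and> d_gr S deg (cs ! j) (cs ! Suc j) \<le> d"
        using Cons.prems(3) by (metis Suc_less_eq length_Cons nth_Cons_Suc)
    qed
    have IH: "(hd cs, last cs) \<in> (stp S deg d)\<^sup>*" using Cons.IH[OF False _ h] Cons.prems(2) by simp
    have "Suc 0 < length (x # cs)" using False by simp
    then have "aeval S x = aeval S (hd cs) \<and> d_gr S deg x (hd cs) \<le> d"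
      using Cons.prems(3) False by (metis hd_conv_nth nth_Cons_0 nth_Cons_Suc)
    moreover have "x \<in> freeM S" "hd cs \<in> freeM S" using Cons.prems(2) False by auto
    ultimately have "(x, hd cs) \<in> stp S deg d" by (simp add: stp_def)
    then show ?thesis using IH False by (simp add: converse_rtrancl_into_rtrancl)
  qed
qed

lemma has_gr_chains_iff:
  "has_gr_chains S deg d \<longleftrightarrow> (\<forall>\<alpha>\<in>freeM S. \<forall>\<gamma>\<in>freeM S. aeval S \<alpha> = aeval S \<gamma> \<longrightarrow> (\<alpha>,\<gamma>) \<in> (stp S deg d)\<^sup>*)"
proof
  assume h: "has_gr_chains S deg d"
  show "\<forall>\<alpha>\<in>freeM S. \<forall>\<gamma>\<in>freeM S. aeval S \<alpha> = aeval S \<gamma> \<longrightarrow> (\<alpha>,\<gamma>) \<in> (stp S deg d)\<^sup>*"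
  proof (intro ballI impI)
    fix \<alpha> \<gamma> assume "\<alpha> \<in> freeM S" "\<gamma> \<in> freeM S" "aeval S \<alpha> = aeval S \<gamma>"
    with h obtain cs where "cs \<noteq> []" "hd cs = \<alpha>" "last cs = \<gamma>" "set cs \<subseteq> freeM S"
      "\<forall>j. Suc j < length cs \<longrightarrow>
               aeval S (cs ! j) = aeval S (cs ! Suc j) \<and> d_gr S deg (cs ! j) (cs ! Suc j) \<le> d"
      unfolding has_gr_chains_def by blast
    from rtrancl_of_chain[OF this(1,4,5)] this(2,3) show "(\<alpha>,\<gamma>) \<in> (stp S deg d)\<^sup>*" by simp
  qed
next
  assume "\<forall>\<alpha>\<in>freeM S. \<forall>\<gamma>\<in>freeM S. aeval S \<alpha> = aeval S \<gamma> \<longrightarrow> (\<alpha>,\<gamma>) \<in> (stp S deg d)\<^sup>*"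
  then show "has_gr_chains S deg d" unfolding has_gr_chains_def using chain_of_rtrancl by blast
qed

section \<open>Dickson\<close>

lemma dickson_aux:
  fixes A :: "'a set"
  assumes "finite A" "X \<subseteq> {f::'a\<Rightarrow>nat. \<forall>x. x\<notin>A \<longrightarrow> f x = 0}"
  shows "\<exists>F. F \<subseteq> X \<and> finite F \<and> (\<forall>x\<in>X. \<exists>f\<in>F. f \<le> x)"
  using assms
proof (induct "card A" arbitrary: A X rule: less_induct)
  case less
  show ?case
  proof (cases "X = {}")
    case True then show ?thesis by auto
  next
    case False
    then obtain x0 where x0: "x0 \<in> X" by auto
    have sub: "\<exists>C. C \<subseteq> {x\<in>X. x b = k} \<and> finite C \<and> (\<forall>x\<in>{x\<in>X. x b = k}. \<exists>c\<in>C. c \<le> x)"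
      if b: "b \<in> A" for b k
    proof -
      let ?X = "{x\<in>X. x b = k}"
      let ?h = "\<lambda>x::'a\<Rightarrow>nat. x(b:=0)"
      have c: "card (A - {b}) < card A" using b less.prems(1) by (meson card_Diff1_less)
      have "?h ` ?X \<subseteq> {f. \<forall>x. x\<notin>A - {b} \<longrightarrow> f x = 0}" using less.prems(2) by auto
      from less.hyps[OF c _ this] less.prems(1)
      obtain G where G: "G \<subseteq> ?h ` ?X" "finite G" "\<forall>y\<in>?h ` ?X. \<exists>g\<in>G. g \<le> y" by auto
      from finite_subset_image[OF G(2) G(1)] obtain C where C: "C \<subseteq> ?X" "finite C" "G = ?h ` C" by blast
      have "\<forall>x\<in>?X. \<exists>c\<in>C. c \<le> x"
      proof
        fix x assume x: "x \<in> ?X"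
        then obtain g where g: "g \<in> G" "g \<le> ?h x" using G(3) by blast
        then obtain c where c: "c \<in> C" "g = ?h c" using C(3) by blast
        have "c \<le> x"
        proof (rule le_funI)
          fix i show "c i \<le> x i"
            using g(2) c C(1) x by (cases "i = b") (auto simp: le_fun_def split: if_splits)
        qed
        then show "\<exists>c\<in>C. c \<le> x" using c by blast
      qed
      then show ?thesis using C by blast
    qed
    have "\<forall>p\<in>Sigma A (\<lambda>b. {..<x0 b}). \<exists>C. C \<subseteq> {x\<in>X. x (fst p) = snd p} \<and> finite C \<and> (\<forall>x\<in>{x\<in>X. x (fst p) = snd p}. \<exists>c\<in>C. c \<le> x)"
    proof
      fix p assume "p \<in> Sigma A (\<lambda>b. {..<x0 b})"
      then have "fst p \<in> A" by auto
      from sub[OF this, of "snd p"] show "\<exists>C. C \<subseteq> {x\<in>X. x (fst p) = snd p} \<and> finite C \<and> (\<forall>x\<in>{x\<in>X. x (fst p) = snd p}. \<exists>c\<in>C. c \<le> x)" .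
    qed
    from bchoice[OF this] obtain Cf where Cf: "\<forall>p\<in>Sigma A (\<lambda>b. {..<x0 b}). Cf p \<subseteq> {x\<in>X. x (fst p) = snd p} \<and> finite (Cf p) \<and> (\<forall>x\<in>{x\<in>X. x (fst p) = snd p}. \<exists>c\<in>Cf p. c \<le> x)"
      by blast
    let ?F = "insert x0 (\<Union>p\<in>Sigma A (\<lambda>b. {..<x0 b}). Cf p)"
    have fin: "finite (Sigma A (\<lambda>b. {..<x0 b}))" using less.prems(1) by auto
    have "?F \<subseteq> X" using Cf x0 by blast
    moreover have "finite ?F" using fin Cf by auto
    moreover have "\<forall>x\<in>X. \<exists>f\<in>?F. f \<le> x"
    proof
      fix x assume x: "x \<in> X"
      show "\<exists>f\<in>?F. f \<le> x"
      proof (cases "x0 \<le> x")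
        case True then show ?thesis by blast
      next
        case False
        then obtain b where b: "x b < x0 b" by (meson le_funI not_le)
        then have "b \<in> A" using x0 less.prems(2) by (metis (mono_tags, lifting) mem_Collect_eq not_less0 subsetD)
        then have p: "(b, x b) \<in> Sigma A (\<lambda>b. {..<x0 b})" using b by auto
        then obtain c where "c \<in> Cf (b, x b)" "c \<le> x" using Cf x by fastforce
        then show ?thesis using p by blast
      qed
    qed
    ultimately show ?thesis by blast
  qed
qed


section \<open>Finiteness of atoms\<close>

lemma mon_gen_gen1: "g \<in> G \<Longrightarrow> g \<in> mon_gen G"
  using mon_gen.gen[OF _ mon_gen.zero, of g G] by simp

lemma atoms_finite:
  assumes "affine_monoid S" "reduced S"
  shows "finite (atoms S)"
proof -
  obtain G where G: "finite G" "S = mon_gen G" using assms(1) affine_monoid_def by blast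
  have U: "units_of_monoid S = {vzero}" using assms(2) reduced_def by blast
  have "y \<in> atoms S \<longrightarrow> y \<in> G" if "y \<in> mon_gen G" for y
    using that
  proof (induction rule: mon_gen.induct)
    case zero
    have "vzero \<in> units_of_monoid S" using U by simp
    then show ?case by (simp add: atoms_def)
  next
    case (gen g x)
    show ?case
    proof
      assume a: "vadd g x \<in> atoms S"
      have "g \<in> S" "x \<in> S" using gen G(2) mon_gen_gen1 by auto
      with a have "g \<in> units_of_monoid S \<or> x \<in> units_of_monoid S" unfolding atoms_def by blast
      then have "g = vzero \<or> x = vzero" using U by blast
      then show "vadd g x \<in> G" using gen a by auto
    qed
  qed
  then have "atoms S \<subseteq> G" using G(2) atoms_def by blast
  then show ?thesis using G(1) finite_subset by blast
qed

section \<open>Existence of a bound\<close>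

definition enc :: "(('i \<Rightarrow> int) \<Rightarrow> nat) \<times> (('i \<Rightarrow> int) \<Rightarrow> nat) \<Rightarrow> (('i \<Rightarrow> int) + ('i \<Rightarrow> int)) \<Rightarrow> nat" where
  "enc p = (\<lambda>s. case s of Inl a \<Rightarrow> fst p a | Inr a \<Rightarrow> snd p a)"

definition dec :: "((('i \<Rightarrow> int) + ('i \<Rightarrow> int)) \<Rightarrow> nat) \<Rightarrow> (('i \<Rightarrow> int) \<Rightarrow> nat) \<times> (('i \<Rightarrow> int) \<Rightarrow> nat)" where
  "dec f = (\<lambda>a. f (Inl a), \<lambda>a. f (Inr a))"

lemma dec_enc[simp]: "dec (enc p) = p"
  by (simp add: dec_def enc_def)

lemma enc_le: "enc p \<le> enc q \<Longrightarrow> fst p a \<le> fst q a \<and> snd p a \<le> snd q a"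
  unfolding enc_def le_fun_def
  by (metis sum.simps(5) sum.simps(6))

lemma basis_exists:
  assumes fin: "finite (atoms S)"
  shows "\<exists>Q. finite Q \<and> Q \<subseteq> {q\<in>simS S. fst q \<noteq> snd q} \<and>
     (\<forall>p\<in>simS S. fst p \<noteq> snd p \<longrightarrow> (\<exists>q\<in>Q. \<forall>a. fst q a \<le> fst p a \<and> snd q a \<le> snd p a))"
proof -
  let ?A = "Inl ` atoms S \<union> Inr ` atoms S"
  let ?X = "enc ` {q\<in>simS S. fst q \<noteq> snd q}"
  have "?X \<subseteq> {f. \<forall>x. x \<notin> ?A \<longrightarrow> f x = 0}"
  proof
    fix f assume "f \<in> ?X"
    then obtain q where q: "q \<in> simS S" "f = enc q" by blast
    then have "fst q \<in> freeM S" "snd q \<in> freeM S" by (auto simp: simS_def)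
    then show "f \<in> {f. \<forall>x. x \<notin> ?A \<longrightarrow> f x = 0}"
      using q(2) by (auto simp: enc_def freeM_def split: sum.splits)
  qed
  from dickson_aux[OF _ this] fin obtain F where F: "F \<subseteq> ?X" "finite F" "\<forall>x\<in>?X. \<exists>f\<in>F. f \<le> x"
    by auto
  let ?Q = "dec ` F"
  have "finite ?Q" using F(2) by simp
  moreover have "?Q \<subseteq> {q\<in>simS S. fst q \<noteq> snd q}" using F(1) by auto
  moreover have "\<forall>p\<in>simS S. fst p \<noteq> snd p \<longrightarrow> (\<exists>q\<in>?Q. \<forall>a. fst q a \<le> fst p a \<and> snd q a \<le> snd p a)"
  proof (intro ballI impI)
    fix p assume p: "p \<in> simS S" "fst p \<noteq> snd p"
    then have "enc p \<in> ?X" by blast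
    then obtain f where f: "f \<in> F" "f \<le> enc p" using F(3) by blast
    then obtain q where q: "f = enc q" using F(1) by blast
    show "\<exists>q\<in>?Q. \<forall>a. fst q a \<le> fst p a \<and> snd q a \<le> snd p a"
      using f q enc_le by (metis dec_enc image_eqI)
  qed
  ultimately show ?thesis by blast
qed

definition msize :: "('i \<Rightarrow> int) set \<Rightarrow> (('i \<Rightarrow> int) \<Rightarrow> nat) \<Rightarrow> nat" where
  "msize S x = (\<Sum>a\<in>atoms S. x a)"

lemma exists_bound:
  assumes fin: "finite (atoms S)"
  shows "\<exists>d. has_gr_chains S deg d"
proof -
  obtain Q where Q: "finite Q" "Q \<subseteq> {q\<in>simS S. fst q \<noteq> snd q}"
     "\<forall>p\<in>simS S. fst p \<noteq> snd p \<longrightarrow> (\<exists>q\<in>Q. \<forall>a. fst q a \<le> fst p a \<and> snd q a \<le> snd p a)"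
    using basis_exists[OF fin] by blast
  define d where "d = Max (insert 0 ((\<lambda>q. max (gr_deg S deg (fst q)) (gr_deg S deg (snd q))) ` Q))"
  have dQ: "max (gr_deg S deg (fst q)) (gr_deg S deg (snd q)) \<le> d" if "q \<in> Q" for q
    unfolding d_def using Q(1) that by (intro Max_ge) auto
  have main: "\<And>\<alpha> \<gamma>. msize S \<alpha> + msize S \<gamma> = n \<Longrightarrow> \<alpha> \<in> freeM S \<Longrightarrow> \<gamma> \<in> freeM S \<Longrightarrow>
      aeval S \<alpha> = aeval S \<gamma> \<Longrightarrow> (\<alpha>, \<gamma>) \<in> (stp S deg d)\<^sup>*" for n
  proof (induction n rule: less_induct)
    case (less n \<alpha> \<gamma>)
    show ?case
    proof (cases "\<alpha> = \<gamma>")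
      case True then show ?thesis by simp
    next
      case False
      then have "(\<alpha>,\<gamma>) \<in> simS S" using less.prems by (simp add: simS_def)
      then obtain q where q: "q \<in> Q" "\<forall>a. fst q a \<le> \<alpha> a \<and> snd q a \<le> \<gamma> a"
        using Q(3) False by fastforce
      obtain u v where uv: "q = (u, v)" by force
      have u: "u \<in> freeM S" "v \<in> freeM S" "aeval S u = aeval S v" "u \<noteq> v"
        using q(1) Q(2) uv by (auto simp: simS_def)
      have le: "\<forall>a. u a \<le> \<alpha> a \<and> v a \<le> \<gamma> a" using q(2) uv by simp
      define \<alpha>' where "\<alpha>' = (\<lambda>a. \<alpha> a - u a)"
      define \<gamma>' where "\<gamma>' = (\<lambda>a. \<gamma> a - v a)"
      have f': "\<alpha>' \<in> freeM S" "\<gamma>' \<in> freeM S" using less.prems minus_freeM \<alpha>'_def \<gamma>'_def by auto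
      have ea: "madd u \<alpha>' = \<alpha>" "madd v \<gamma>' = \<gamma>" using le by (auto simp: madd_def \<alpha>'_def \<gamma>'_def fun_eq_iff)
      have "vadd (aeval S u) (aeval S \<alpha>') = vadd (aeval S v) (aeval S \<gamma>')"
        using ea less.prems(4) by (metis aeval_madd)
      then have ae': "aeval S \<alpha>' = aeval S \<gamma>'" using u(3) vadd_cancel_left by metis
      obtain b where b: "u b \<noteq> v b" using u(4) by (meson ext)
      then have bA: "b \<in> atoms S" using u(1,2) unfolding freeM_def by (metis (mono_tags, lifting) mem_Collect_eq)
      have "msize S \<alpha>' + msize S \<gamma>' < msize S \<alpha> + msize S \<gamma>"
      proof -
        have "(\<Sum>a\<in>atoms S. \<alpha>' a + \<gamma>' a) < (\<Sum>a\<in>atoms S. \<alpha> a + \<gamma> a)"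
        proof (rule sum_strict_mono_ex1[OF fin])
          show "\<forall>x\<in>atoms S. \<alpha>' x + \<gamma>' x \<le> \<alpha> x + \<gamma> x" by (auto simp: \<alpha>'_def \<gamma>'_def)
          show "\<exists>a\<in>atoms S. \<alpha>' a + \<gamma>' a < \<alpha> a + \<gamma> a"
          proof (intro bexI[of _ b])
            have "u b \<le> \<alpha> b" "v b \<le> \<gamma> b" using le by auto
            then show "\<alpha>' b + \<gamma>' b < \<alpha> b + \<gamma> b" using b unfolding \<alpha>'_def \<gamma>'_def by arith
          qed (rule bA)
        qed
        then show ?thesis by (simp add: msize_def sum.distrib)
      qed
      then have IH: "(\<alpha>', \<gamma>') \<in> (stp S deg d)\<^sup>*"
        using less.IH less.prems(1) f' ae' by blast
      have "(madd \<alpha>' v, madd \<gamma>' v) \<in> (stp S deg d)\<^sup>*"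
        using stp_rtrancl_transl[OF IH u(2)] .
      then have r2: "(madd v \<alpha>', \<gamma>) \<in> (stp S deg d)\<^sup>*" using ea madd_comm by metis
      have "d_gr S deg u v \<le> d" using d_gr_le[of S deg u v] dQ[OF q(1)] uv by (metis fst_conv snd_conv max.bounded_iff le_trans)
      then have "(u, v) \<in> stp S deg d" using u by (simp add: stp_def)
      from stp_transl[OF this f'(1)] ea have "(\<alpha>, madd v \<alpha>') \<in> stp S deg d" by simp
      then show ?thesis using r2 by (rule converse_rtrancl_into_rtrancl)
    qed
  qed
  have "has_gr_chains S deg d" unfolding has_gr_chains_iff using main by blast
  then show ?thesis by blast
qed


section \<open>Congruences\<close>

lemma simS_cong: "is_congruence S (simS S)"
  unfolding is_congruence_def
proof
  show "equiv (freeM S) (simS S)"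
    by (rule equivI) (auto simp: simS_def refl_on_def sym_def trans_def)
  show "\<forall>\<alpha> \<gamma> \<beta>. (\<alpha>, \<gamma>) \<in> simS S \<longrightarrow> \<beta> \<in> freeM S \<longrightarrow> (madd \<alpha> \<beta>, madd \<gamma> \<beta>) \<in> simS S"
    by (auto simp: simS_def madd_freeM aeval_madd)
qed

lemma decomp_step:
  assumes "(x, y) \<in> stp S deg c"
  shows "\<exists>u v g. x = madd u g \<and> y = madd v g \<and> g \<in> freeM S \<and> (u, v) \<in> simS S
     \<and> gr_deg S deg u \<le> c \<and> gr_deg S deg v \<le> c"
proof -
  have xy: "x \<in> freeM S" "y \<in> freeM S" "aeval S x = aeval S y" "d_gr S deg x y \<le> c"
    using assms by (auto simp: stp_def)
  define g where "g = mgcd x y"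
  define u where "u = (\<lambda>a. x a - g a)"
  define v where "v = (\<lambda>a. y a - g a)"
  have g: "g \<in> freeM S" using xy by (auto simp: freeM_def g_def mgcd_def)
  have ex: "x = madd u g" "y = madd v g" by (auto simp: madd_def u_def v_def g_def mgcd_def fun_eq_iff)
  have uv: "u \<in> freeM S" "v \<in> freeM S" using xy minus_freeM u_def v_def by auto
  have "vadd (aeval S u) (aeval S g) = vadd (aeval S v) (aeval S g)"
    using xy(3) ex by (metis aeval_madd)
  then have "aeval S u = aeval S v" by (rule vadd_cancel)
  then have "(u, v) \<in> simS S" using uv by (simp add: simS_def)
  moreover have "gr_deg S deg u \<le> c" "gr_deg S deg v \<le> c"
    using xy(4) unfolding d_gr_def u_def v_def g_def by auto
  ultimately show ?thesis using ex g by blast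
qed

lemma in_R:
  assumes R: "is_congruence S R" "{(u,v). (u,v)\<in>simS S \<and> gr_deg S deg u \<le> c \<and> gr_deg S deg v \<le> c} \<subseteq> R"
    and xy: "(x,y) \<in> (stp S deg c)\<^sup>*" "x \<in> freeM S"
  shows "(x,y) \<in> R"
  using xy
proof (induction rule: rtrancl_induct)
  case base
  then show ?case using R(1) by (auto simp: is_congruence_def equiv_def refl_on_def)
next
  case (step y z)
  from decomp_step[OF step.hyps(2)] obtain u v g where
    d: "y = madd u g" "z = madd v g" "g \<in> freeM S" "(u, v) \<in> simS S"
     "gr_deg S deg u \<le> c" "gr_deg S deg v \<le> c" by blast
  then have "(u, v) \<in> R" using R(2) by blast
  then have "(y, z) \<in> R" using R(1) d unfolding is_congruence_def by blast
  moreover have "(x, y) \<in> R" using step by blast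
  ultimately show ?case using R(1) unfolding is_congruence_def equiv_def trans_def by blast
qed

lemma stpR_cong: "is_congruence S ((stp S deg d)\<^sup>* \<inter> freeM S \<times> freeM S)"
  unfolding is_congruence_def
proof
  show "equiv (freeM S) ((stp S deg d)\<^sup>* \<inter> freeM S \<times> freeM S)"
  proof (rule equivI)
    show "refl_on (freeM S) ((stp S deg d)\<^sup>* \<inter> freeM S \<times> freeM S)"
      by (auto simp: refl_on_def)
    show "sym ((stp S deg d)\<^sup>* \<inter> freeM S \<times> freeM S)"
      using sym_rtrancl[OF stp_sym[of S deg d]] by (auto simp: sym_def)
    show "trans ((stp S deg d)\<^sup>* \<inter> freeM S \<times> freeM S)"
      using trans_rtrancl[of "stp S deg d"] by (auto simp: trans_def)
  qed auto
  show "\<forall>\<alpha> \<gamma> \<beta>. (\<alpha>, \<gamma>) \<in> (stp S deg d)\<^sup>* \<inter> freeM S \<times> freeM S \<longrightarrow> \<beta> \<in> freeM S \<longrightarrow>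
     (madd \<alpha> \<beta>, madd \<gamma> \<beta>) \<in> (stp S deg d)\<^sup>* \<inter> freeM S \<times> freeM S"
    by (auto simp: stp_rtrancl_transl madd_freeM)
qed

theorem proposition3p2:
  fixes S :: "('i::finite \<Rightarrow> int) set" and deg :: "('i \<Rightarrow> int) \<Rightarrow> nat"
  assumes "affine_monoid S" and "reduced S" and "connected_graded S deg"
  shows "(\<exists>\<Lambda>. \<Lambda> \<subseteq> freeM S \<times> freeM S \<and> cong_gen S \<Lambda> = simS S \<and>
             (\<forall>(\<alpha>, \<gamma>)\<in>\<Lambda>. gr_deg S deg \<alpha> \<le> c_gr S deg \<and> gr_deg S deg \<gamma> \<le> c_gr S deg))
       \<and> (\<forall>d. (\<exists>\<Lambda>. \<Lambda> \<subseteq> freeM S \<times> freeM S \<and> cong_gen S \<Lambda> = simS S \<and>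
                (\<forall>(\<alpha>, \<gamma>)\<in>\<Lambda>. gr_deg S deg \<alpha> \<le> d \<and> gr_deg S deg \<gamma> \<le> d))
              \<longrightarrow> c_gr S deg \<le> d)"
proof
  have fin: "finite (atoms S)" using atoms_finite assms(1,2) by blast
  obtain d0 where "has_gr_chains S deg d0" using exists_bound[OF fin] by blast
  then have hc: "has_gr_chains S deg (c_gr S deg)" unfolding c_gr_def by (rule LeastI)
  let ?c = "c_gr S deg"
  let ?L = "{(u,v). (u,v)\<in>simS S \<and> gr_deg S deg u \<le> ?c \<and> gr_deg S deg v \<le> ?c}"
  have "cong_gen S ?L = simS S"
  proof
    show "cong_gen S ?L \<subseteq> simS S" unfolding cong_gen_def using simS_cong by blast
    show "simS S \<subseteq> cong_gen S ?L" unfolding cong_gen_def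
    proof (rule Inter_greatest)
      fix R assume "R \<in> {R. is_congruence S R \<and> ?L \<subseteq> R}"
      then have R: "is_congruence S R" "?L \<subseteq> R" by auto
      show "simS S \<subseteq> R"
      proof
        fix p assume p: "p \<in> simS S"
        obtain x y where xy: "p = (x, y)" by force
        then have "x \<in> freeM S" "y \<in> freeM S" "aeval S x = aeval S y" using p by (auto simp: simS_def)
        moreover then have "(x,y) \<in> (stp S deg ?c)\<^sup>*" using hc unfolding has_gr_chains_iff by blast
        ultimately show "p \<in> R" using in_R[OF R] xy by blast
      qed
    qed
  qed
  moreover have "?L \<subseteq> freeM S \<times> freeM S" by (auto simp: simS_def)
  ultimately show "\<exists>\<Lambda>. \<Lambda> \<subseteq> freeM S \<times> freeM S \<and> cong_gen S \<Lambda> = simS S \<and>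
             (\<forall>(\<alpha>, \<gamma>)\<in>\<Lambda>. gr_deg S deg \<alpha> \<le> c_gr S deg \<and> gr_deg S deg \<gamma> \<le> c_gr S deg)"
    by (intro exI[of _ ?L]) auto
next
  show "\<forall>d. (\<exists>\<Lambda>. \<Lambda> \<subseteq> freeM S \<times> freeM S \<and> cong_gen S \<Lambda> = simS S \<and>
                (\<forall>(\<alpha>, \<gamma>)\<in>\<Lambda>. gr_deg S deg \<alpha> \<le> d \<and> gr_deg S deg \<gamma> \<le> d))
              \<longrightarrow> c_gr S deg \<le> d"
  proof (intro allI impI)
    fix d assume "\<exists>\<Lambda>. \<Lambda> \<subseteq> freeM S \<times> freeM S \<and> cong_gen S \<Lambda> = simS S \<and>
                (\<forall>(\<alpha>, \<gamma>)\<in>\<Lambda>. gr_deg S deg \<alpha> \<le> d \<and> gr_deg S deg \<gamma> \<le> d)"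
    then obtain L where L: "L \<subseteq> freeM S \<times> freeM S" "cong_gen S L = simS S"
       "\<forall>(\<alpha>, \<gamma>)\<in>L. gr_deg S deg \<alpha> \<le> d \<and> gr_deg S deg \<gamma> \<le> d" by blast
    let ?R = "(stp S deg d)\<^sup>* \<inter> freeM S \<times> freeM S"
    have "L \<subseteq> ?R"
    proof
      fix p assume p: "p \<in> L"
      obtain x y where xy: "p = (x, y)" by force
      have "L \<subseteq> cong_gen S L" unfolding cong_gen_def by blast
      then have "(x, y) \<in> simS S" using L(2) p xy by blast
      then have xy2: "x \<in> freeM S" "y \<in> freeM S" "aeval S x = aeval S y" by (auto simp: simS_def)
      have "gr_deg S deg x \<le> d" "gr_deg S deg y \<le> d" using L(3) p xy by auto
      then have "d_gr S deg x y \<le> d" using d_gr_le[of S deg x y] by simp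
      then have "(x, y) \<in> stp S deg d" using xy2 by (simp add: stp_def)
      then show "p \<in> ?R" using xy xy2 by auto
    qed
    then have "simS S \<subseteq> ?R" using L(2) stpR_cong[of S deg d] unfolding cong_gen_def by blast
    then have "has_gr_chains S deg d" unfolding has_gr_chains_iff by (auto simp: simS_def)
    then show "c_gr S deg \<le> d" unfolding c_gr_def by (rule Least_le)
  qed
qed

end
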